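(* Let $I\subset\mathbb{R}$ be an interval with $0\in I$. Suppose $\phi_{\tau,t}$ is generated by a time-dependent vector field of the form $(1,H_t)^T$ on $\mathbb{R}^+\times\Omega$, where $H_t$ has a formal $\tau$-series $H_t=\sum_{n\ge0}\frac{\tau^n}{n!}H_{n,t}$ on this region for all $\tau\in I$. Then $$\pi\circ\phi_{\tau,t}\circ\mathcal{I}_t=\mathrm{Id}_{\mathbb{R}^N}+\mathcal{T}_{H_t}(\tau)\cdot H_t\quad\text{on }I\times\mathbb{R}^+\times\Omega .$$
   Context: $\Omega\subset\mathbb{R}^N$ open. $\pi(t,x)=x$, $\mathcal{I}_t(x)=(t,x)$. For fixed $t$, $\phi_{\tau,t}$ is the flow in $\tau$ (with $\phi_{0,t}=\mathrm{Id}$) of $\frac{d\phi}{d\tau}=(1,H_t)^T\circ\phi$, whose first component evolves as $\tau$ and whose remaining components solve $\frac{d\xi}{d\tau}=H_t(\tau,\xi)$. $H_t$-transformation: for time-dependent vector fields $F_t=\sum_n\frac{\tau^n}{n!}F_{n,t}$ and $H_t=\sum_n\frac{\tau^n}{n!}H_{n,t}$ on $\mathbb{R}^N$ (formal $\tau$-series), define recursively $F^{[0]}_n=F_{n,t}$ and $F^{[i+1]}_n=F^{[i]}_{n+1}+\sum_{k=0}^nC_n^k\,D_\xi F^{[i]}_k\cdot H_{n-k,t}$ for $i\ge0$ ($C_n^k$ binomial coefficients, $D_\xi$ Jacobian in $\xi$), and set $\mathcal{T}_{H_t}(\tau)\cdot F_t=\sum_{n\ge0}\frac{\tau^{n+1}}{(n+1)!}F^{[n]}_{0,t}$.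 The identity is an identity of formal series in $\tau$. *)

theory Defs
  imports "HOL-Analysis.Analysis"
begin

fun Ck_on :: "nat \<Rightarrow> 'a set \<Rightarrow> ('a::real_normed_vector \<Rightarrow> 'b::real_normed_vector) \<Rightarrow> bool" where
  "Ck_on 0 S f = continuous_on S f"
| "Ck_on (Suc k) S f =
     (\<exists>f'. (\<forall>x\<in>S. (f has_derivative f' x) (at x within S)) \<and> (\<forall>v. Ck_on k S (\<lambda>x. f' x v)))"

definition smooth_on :: "'a set \<Rightarrow> ('a::real_normed_vector \<Rightarrow> 'b::real_normed_vector) \<Rightarrow> bool" where
  "smooth_on S f \<longleftrightarrow> (\<forall>k. Ck_on k S f)"

definition nth_vderiv :: "nat \<Rightarrow> real set \<Rightarrow> (real \<Rightarrow> 'a::real_normed_vector) \<Rightarrow> real \<Rightarrow> 'a" where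
  "nth_vderiv n S f = ((\<lambda>g s. vector_derivative g (at s within S)) ^^ n) f"

primrec Fbr :: "(nat \<Rightarrow> 'a \<Rightarrow> 'a) \<Rightarrow> (nat \<Rightarrow> 'a \<Rightarrow> 'a) \<Rightarrow> nat \<Rightarrow> nat \<Rightarrow> 'a::euclidean_space \<Rightarrow> 'a" where
  "Fbr F Hs 0 = F"
| "Fbr F Hs (Suc i) = (\<lambda>n \<xi>. Fbr F Hs i (Suc n) \<xi>
      + (\<Sum>k\<le>n. of_nat (n choose k) *\<^sub>R frechet_derivative (Fbr F Hs i k) (at \<xi>) (Hs (n - k) \<xi>)))"

text \<open>The m-th Taylor coefficient (w.r.t. tau^m/m!) of the formal series
  T_H(tau).F = sum_n tau^(n+1)/(n+1)! F^[n]_0.\<close>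
definition Htrans_coeff :: "(nat \<Rightarrow> 'a \<Rightarrow> 'a) \<Rightarrow> (nat \<Rightarrow> 'a \<Rightarrow> 'a) \<Rightarrow> nat \<Rightarrow> 'a::euclidean_space \<Rightarrow> 'a" where
  "Htrans_coeff Hs F m = (if m = 0 then (\<lambda>_. 0) else Fbr F Hs (m - 1) 0)"

end

theory Submission
  imports Defs
begin


lemma Ck_cong:
  assumes "\<And>x. x \<in> S \<Longrightarrow> f x = g x" "Ck_on k S f"
  shows "Ck_on k S g"
  using assms
proof (induction k arbitrary: f g)
  case 0
  then show ?case using continuous_on_cong by force
next
  case (Suc k)
  then obtain f' where f': "\<forall>x\<in>S. (f has_derivative f' x) (at x within S)" "\<forall>v. Ck_on k S (\<lambda>x. f' x v)"
    by auto
  have "\<forall>x\<in>S. (g has_derivative f' x) (at x within S)"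
    using f'(1) Suc.prems(1) has_derivative_transform[of _ S g f] by auto
  then show ?case using f'(2) by auto
qed

lemma Ck_Suc_imp: "Ck_on (Suc k) S f \<Longrightarrow> Ck_on k S f"
proof (induction k arbitrary: f)
  case 0
  then obtain f' where "\<forall>x\<in>S. (f has_derivative f' x) (at x within S)" by auto
  then show ?case
    by (auto simp: continuous_on_eq_continuous_within intro: has_derivative_continuous)
next
  case (Suc k)
  then obtain f' where "\<forall>x\<in>S. (f has_derivative f' x) (at x within S)" "\<forall>v. Ck_on (Suc k) S (\<lambda>x. f' x v)"
    by auto
  then have "\<forall>v. Ck_on k S (\<lambda>x. f' x v)" using Suc.IH by blast
  then show ?case using \<open>\<forall>x\<in>S. (f has_derivative f' x) (at x within S)\<close>
    by (simp only: Ck_on.simps) blast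
qed

lemma Ck_const: "Ck_on k S (\<lambda>x. c)"
proof (induction k arbitrary: c)
  case 0 then show ?case by simp
next
  case (Suc k)
  have "\<forall>x\<in>S. ((\<lambda>x. c) has_derivative (\<lambda>v. 0)) (at x within S)" by simp
  then show ?case using Suc by (auto intro!: exI[of _ "\<lambda>x v. 0"])
qed

lemma Ck_add: "Ck_on k S f \<Longrightarrow> Ck_on k S g \<Longrightarrow> Ck_on k S (\<lambda>x. f x + g x)"
proof (induction k arbitrary: f g)
  case 0 then show ?case by (simp add: continuous_on_add)
next
  case (Suc k)
  from Suc.prems obtain f' g' where f': "\<forall>x\<in>S. (f has_derivative f' x) (at x within S)" "\<forall>v. Ck_on k S (\<lambda>x. f' x v)"
    and g': "\<forall>x\<in>S. (g has_derivative g' x) (at x within S)" "\<forall>v. Ck_on k S (\<lambda>x. g' x v)"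
    by auto
  have "\<forall>x\<in>S. ((\<lambda>x. f x + g x) has_derivative (\<lambda>v. f' x v + g' x v)) (at x within S)"
    using f' g' by (auto intro: has_derivative_add)
  then show ?case using Suc.IH f'(2) g'(2) by auto
qed

lemma Ck_linear: "bounded_linear L \<Longrightarrow> Ck_on k S f \<Longrightarrow> Ck_on k S (\<lambda>x. L (f x))"
proof (induction k arbitrary: f)
  case 0 then show ?case
    by (simp add: bounded_linear.continuous_on)
next
  case (Suc k)
  from Suc.prems obtain f' where f': "\<forall>x\<in>S. (f has_derivative f' x) (at x within S)" "\<forall>v. Ck_on k S (\<lambda>x. f' x v)"
    by auto
  have "\<forall>x\<in>S. ((\<lambda>x. L (f x)) has_derivative (\<lambda>v. L (f' x v))) (at x within S)"
    using f' Suc.prems(1) bounded_linear.has_derivative by blast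
  then show ?case using Suc f'(2) by auto
qed

lemma Ck_scaleR: "Ck_on k S a \<Longrightarrow> Ck_on k S f \<Longrightarrow> Ck_on k S (\<lambda>x. a x *\<^sub>R f x)"
proof (induction k arbitrary: a f)
  case 0 then show ?case by (simp add: continuous_on_scaleR)
next
  case (Suc k)
  from Suc.prems obtain f' a' where f': "\<forall>x\<in>S. (f has_derivative f' x) (at x within S)" "\<forall>v. Ck_on k S (\<lambda>x. f' x v)"
    and a': "\<forall>x\<in>S. (a has_derivative a' x) (at x within S)" "\<forall>v. Ck_on k S (\<lambda>x. a' x v)"
    by auto
  have "\<forall>x\<in>S. ((\<lambda>x. a x *\<^sub>R f x) has_derivative (\<lambda>v. a x *\<^sub>R f' x v + a' x v *\<^sub>R f x)) (at x within S)"
    using f' a' by (auto intro: has_derivative_scaleR)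
  moreover have "Ck_on k S (\<lambda>x. a x *\<^sub>R f' x v + a' x v *\<^sub>R f x)" for v
  proof -
    have "Ck_on k S a" "Ck_on k S f" using Suc.prems Ck_Suc_imp by blast+
    then have "Ck_on k S (\<lambda>x. a x *\<^sub>R f' x v)" "Ck_on k S (\<lambda>x. a' x v *\<^sub>R f x)"
      using Suc.IH f'(2) a'(2) by blast+
    then show ?thesis by (rule Ck_add)
  qed
  ultimately show ?case by auto
qed

lemma Ck_sum: "finite A \<Longrightarrow> (\<And>i. i \<in> A \<Longrightarrow> Ck_on k S (f i)) \<Longrightarrow> Ck_on k S (\<lambda>x. \<Sum>i\<in>A. f i x)"
  proof (induction A rule: finite_induct)
  case empty then show ?case by (simp add: Ck_const)
next
  case (insert a A) then show ?case by (simp add: Ck_add)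
qed

lemma D_cong:
  assumes "x \<in> S" "\<And>y. y \<in> S \<Longrightarrow> f y = g y"
  shows "frechet_derivative f (at x within S) = frechet_derivative g (at x within S)"
proof -
  have "(f has_derivative f') (at x within S) \<longleftrightarrow> (g has_derivative f') (at x within S)" for f'
    using assms has_derivative_transform[of x S f g f'] has_derivative_transform[of x S g f f'] by auto
  then show ?thesis unfolding frechet_derivative_def by simp
qed



lemma lin_repr:
  fixes L :: "'a::euclidean_space \<Rightarrow> 'c::real_normed_vector"
  assumes "linear L"
  shows "L w = (\<Sum>b\<in>Basis. (w \<bullet> b) *\<^sub>R L b)"
proof -
  have "L w = L (\<Sum>b\<in>Basis. (w \<bullet> b) *\<^sub>R b)" by (simp add: euclidean_representation)
  also have "\<dots> = (\<Sum>b\<in>Basis. (w \<bullet> b) *\<^sub>R L b)"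
    using assms by (simp add: linear_sum linear_scale o_def)
  finally show ?thesis .
qed

definition Dw :: "('x::real_normed_vector) set \<Rightarrow> ('x \<Rightarrow> 'c::real_normed_vector) \<Rightarrow> 'x \<Rightarrow> 'x \<Rightarrow> 'c" where
  "Dw S f x = frechet_derivative f (at x within S)"

locale setting =
  fixes I :: "real set" and Om :: "'a::euclidean_space set"
  assumes opnO: "open Om" and intI: "is_interval I" and nondeg: "\<exists>a\<in>I. \<exists>b\<in>I. a < b"
begin

abbreviation "S \<equiv> I \<times> Om"
abbreviation "sm f \<equiv> smooth_on S f"
abbreviation "D \<equiv> Dw S"

lemma I_seg: 
  assumes "s \<in> I"
  obtains a b where "a \<in> I" "b \<in> I" "a \<le> s" "s \<le> b" "a < b" "{a..b} \<subseteq> I"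
proof -
  obtain a0 b0 where ab: "a0 \<in> I" "b0 \<in> I" "a0 < b0" using nondeg by blast
  define a where "a = min s a0"
  define b where "b = max s b0"
  have "a \<in> I" "b \<in> I" using ab assms by (auto simp: a_def b_def min_def max_def)
  moreover have "{a..b} \<subseteq> I"
  proof
    fix y assume "y \<in> {a..b}"
    then show "y \<in> I" using mem_is_interval_1_I[OF intI \<open>a \<in> I\<close> \<open>b \<in> I\<close>] by auto
  qed
  moreover have "a \<le> s" "s \<le> b" "a < b" using ab by (auto simp: a_def b_def)
  ultimately show ?thesis using that by blast
qed

lemma I_nbot: "s \<in> I \<Longrightarrow> at s within I \<noteq> bot"
proof -
  assume "s \<in> I"
  then obtain a b where "a \<le> s" "s \<le> b" "a < b" "{a..b} \<subseteq> I" by (rule I_seg)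
  then have "s islimpt {a..b}" by simp
  then have "s islimpt I" using \<open>{a..b} \<subseteq> I\<close> islimpt_subset by blast
  then show ?thesis by (simp add: trivial_limit_within)
qed

lemma uniq:
  assumes "p \<in> S" "(f has_derivative f1) (at p within S)" "(f has_derivative f2) (at p within S)"
  shows "f1 = f2"
proof (rule frechet_derivative_unique_within[OF assms(2,3)])
  fix i :: "real \<times> 'a" and e :: real
  assume i: "i \<in> Basis" and e: "e > 0"
  obtain t x where p: "p = (t, x)" "t \<in> I" "x \<in> Om" using assms(1) by auto
  show "\<exists>d. 0 < \<bar>d\<bar> \<and> \<bar>d\<bar> < e \<and> p + d *\<^sub>R i \<in> S"
  proof (cases "i = (1, 0)")
    case True
    have "t islimpt I" using I_nbot[OF p(2)] by (simp add: trivial_limit_within)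
    then obtain t' where "t' \<in> I" "t' \<noteq> t" "dist t' t < e"
      using e islimpt_approachable by blast
    then have "p + (t' - t) *\<^sub>R i \<in> S" using True p by simp
    moreover have "0 < \<bar>t' - t\<bar>" "\<bar>t' - t\<bar> < e" using \<open>t' \<noteq> t\<close> \<open>dist t' t < e\<close>
      by (auto simp: dist_real_def)
    ultimately show ?thesis by (intro exI[of _ "t' - t"]) simp
  next
    case False
    then obtain v where v: "i = (0, v)" "v \<in> Basis" using i by (auto simp: Basis_prod_def)
    obtain r where r: "r > 0" "ball x r \<subseteq> Om" using opnO p(3) open_contains_ball by blast
    have n: "norm v = 1" using v(2) by simp
    have "dist x (x + (min e r / 2) *\<^sub>R v) < r"
      using r(1) e by (simp add: dist_norm n)
    then have "x + (min e r / 2) *\<^sub>R v \<in> Om" using r(2) by auto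
    then have "p + (min e r / 2) *\<^sub>R i \<in> S" using p v by simp
    moreover have "0 < \<bar>min e r / 2\<bar>" "\<bar>min e r / 2\<bar> < e" using e r(1) by auto
    ultimately show ?thesis by (intro exI[of _ "min e r / 2"]) simp
  qed
qed

lemma D_eq: "p \<in> S \<Longrightarrow> (f has_derivative f') (at p within S) \<Longrightarrow> D f p = f'"
proof -
  assume a: "p \<in> S" "(f has_derivative f') (at p within S)"
  have "f differentiable (at p within S)" using a(2) by (rule differentiableI)
  then have "(f has_derivative frechet_derivative f (at p within S)) (at p within S)"
    by (simp add: frechet_derivative_works)
  then show ?thesis unfolding Dw_def using uniq a by blast
qed

lemma D_cong': "p \<in> S \<Longrightarrow> (\<And>q. q \<in> S \<Longrightarrow> f q = g q) \<Longrightarrow> D f p = D g p"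
  unfolding Dw_def by (rule D_cong)

lemma sm_D: "sm f \<Longrightarrow> p \<in> S \<Longrightarrow> (f has_derivative D f p) (at p within S)"
proof -
  assume "sm f" "p \<in> S"
  then have "Ck_on 1 S f" by (simp add: smooth_on_def)
  then obtain f' where "\<forall>x\<in>S. (f has_derivative f' x) (at x within S)" by auto
  then have "(f has_derivative f' p) (at p within S)" using \<open>p \<in> S\<close> by blast
  moreover from this have "D f p = f' p" using D_eq[OF \<open>p \<in> S\<close>] by blast
  ultimately show ?thesis by simp
qed

lemma sm_cont: "sm f \<Longrightarrow> continuous_on S f"
  unfolding smooth_on_def by (drule spec[of _ 0]) simp

lemma sm_Dv: "sm f \<Longrightarrow> sm (\<lambda>x. D f x v)"
  unfolding smooth_on_def
proof
  fix k assume "\<forall>k. Ck_on k S f"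
  then have "Ck_on (Suc k) S f" by blast
  then obtain f' where f': "\<forall>x\<in>S. (f has_derivative f' x) (at x within S)" "\<forall>v. Ck_on k S (\<lambda>x. f' x v)"
    by auto
  have "f' x v = D f x v" if "x \<in> S" for x
  proof -
    have "(f has_derivative f' x) (at x within S)" using f'(1) that by blast
    then have "D f x = f' x" by (rule D_eq[OF that])
    then show ?thesis by simp
  qed
  then show "Ck_on k S (\<lambda>x. D f x v)" using f'(2) Ck_cong[of S "\<lambda>x. f' x v" "\<lambda>x. D f x v" k] by blast
qed

lemma sm_add: "sm f \<Longrightarrow> sm g \<Longrightarrow> sm (\<lambda>x. f x + g x)"
  by (simp add: smooth_on_def Ck_add)
lemma sm_const: "sm (\<lambda>x. c)"
  by (simp add: smooth_on_def Ck_const)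
lemma sm_scaleR: "sm a \<Longrightarrow> sm f \<Longrightarrow> sm (\<lambda>x. a x *\<^sub>R f x)"
  by (simp add: smooth_on_def Ck_scaleR)
lemma sm_linear: "bounded_linear L \<Longrightarrow> sm f \<Longrightarrow> sm (\<lambda>x. L (f x))"
  by (simp add: smooth_on_def Ck_linear)
lemma sm_sum: "finite A \<Longrightarrow> (\<And>i. i \<in> A \<Longrightarrow> sm (f i)) \<Longrightarrow> sm (\<lambda>x. \<Sum>i\<in>A. f i x)"
  by (simp add: smooth_on_def Ck_sum)
lemma sm_cong: "sm f \<Longrightarrow> (\<And>x. x \<in> S \<Longrightarrow> f x = g x) \<Longrightarrow> sm g"
  unfolding smooth_on_def using Ck_cong by blast

lemma D_linear_map: "sm f \<Longrightarrow> p \<in> S \<Longrightarrow> linear (D f p)"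
  using sm_D has_derivative_linear by blast

lemma D_add: "sm f \<Longrightarrow> sm g \<Longrightarrow> p \<in> S \<Longrightarrow> D (\<lambda>x. f x + g x) p v = D f p v + D g p v"
  by (subst D_eq[OF _ has_derivative_add[OF sm_D sm_D]]) auto

lemma D_scaleR: "sm a \<Longrightarrow> sm f \<Longrightarrow> p \<in> S \<Longrightarrow> D (\<lambda>x. a x *\<^sub>R f x) p v = a p *\<^sub>R D f p v + D a p v *\<^sub>R f p"
  by (subst D_eq[OF _ has_derivative_scaleR[OF sm_D sm_D]]) auto

lemma D_lin: "bounded_linear L \<Longrightarrow> sm f \<Longrightarrow> p \<in> S \<Longrightarrow> D (\<lambda>x. L (f x)) p v = L (D f p v)"
  by (subst D_eq[OF _ bounded_linear.has_derivative[OF _ sm_D]]) auto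

lemma D_sum: "finite A \<Longrightarrow> (\<And>i. i \<in> A \<Longrightarrow> sm (f i)) \<Longrightarrow> p \<in> S \<Longrightarrow>
   D (\<lambda>x. \<Sum>i\<in>A. f i x) p v = (\<Sum>i\<in>A. D (f i) p v)"
  by (subst D_eq[OF _ has_derivative_sum[OF sm_D]]) auto

end



definition DT :: "(real \<times> 'a::real_normed_vector) set \<Rightarrow> (real \<times> 'a \<Rightarrow> 'c::real_normed_vector) \<Rightarrow> real \<times> 'a \<Rightarrow> 'c" where
  "DT S f q = Dw S f q (1, 0)"

lemma DT_eq: "DT S f = (\<lambda>q. Dw S f q (1, 0))"
  by (rule ext) (simp add: DT_def)

lemma comb:
  fixes f :: "nat \<Rightarrow> nat \<Rightarrow> 'v::real_vector"
  shows "(\<Sum>k\<le>n. of_nat (n choose k) *\<^sub>R (f (Suc k) (n - k) + f k (Suc (n - k))))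
       = (\<Sum>k\<le>Suc n. of_nat (Suc n choose k) *\<^sub>R f k (Suc n - k))"
proof -
  have e1: "(\<Sum>k\<le>Suc n. of_nat (n choose k) *\<^sub>R f k (Suc n - k)) = (\<Sum>k\<le>n. of_nat (n choose k) *\<^sub>R f k (Suc (n - k)))"
    by (simp add: Suc_diff_le)
  have e2: "(\<Sum>k\<le>Suc n. of_nat (n choose k) *\<^sub>R f k (Suc n - k)) = f 0 (Suc n) + (\<Sum>k\<le>n. of_nat (n choose Suc k) *\<^sub>R f (Suc k) (n - k))"
    by (subst sum.atMost_Suc_shift) simp
  have e3: "(\<Sum>k\<le>Suc n. of_nat (Suc n choose k) *\<^sub>R f k (Suc n - k)) =
     f 0 (Suc n) + (\<Sum>k\<le>n. (of_nat (n choose k) *\<^sub>R f (Suc k) (n - k) + of_nat (n choose Suc k) *\<^sub>R f (Suc k) (n - k)))"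
    by (subst sum.atMost_Suc_shift) (simp add: scaleR_left_distrib)
  have "(\<Sum>k\<le>n. of_nat (n choose k) *\<^sub>R (f (Suc k) (n - k) + f k (Suc (n - k))))
     = (\<Sum>k\<le>n. of_nat (n choose k) *\<^sub>R f (Suc k) (n - k)) + (\<Sum>k\<le>n. of_nat (n choose k) *\<^sub>R f k (Suc (n - k)))"
    by (simp add: scaleR_right_distrib sum.distrib)
  also have "\<dots> = (\<Sum>k\<le>n. of_nat (n choose k) *\<^sub>R f (Suc k) (n - k)) + (f 0 (Suc n) + (\<Sum>k\<le>n. of_nat (n choose Suc k) *\<^sub>R f (Suc k) (n - k)))"
    using e1 e2 by simp
  also have "\<dots> = (\<Sum>k\<le>Suc n. of_nat (Suc n choose k) *\<^sub>R f k (Suc n - k))"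
    unfolding e3 by (simp add: sum.distrib algebra_simps)
  finally show ?thesis .
qed

context setting
begin

abbreviation "Dt \<equiv> DT S"

lemma D_cong2: "p \<in> S \<Longrightarrow> (\<And>q. q \<in> S \<Longrightarrow> f q = g q) \<Longrightarrow> D f p v = D g p v"
  using D_cong'[of p f g] by simp

lemma sm_Dt: "sm f \<Longrightarrow> sm (Dt f)"
  unfolding DT_eq by (rule sm_Dv)

lemma sm_Dtn: "sm f \<Longrightarrow> sm ((Dt ^^ n) f)"
  by (induction n) (auto intro: sm_Dt)

lemma VD:
  assumes "sm F" "s \<in> I" "\<And>\<tau>. \<tau> \<in> I \<Longrightarrow> c \<tau> \<in> S" "(c has_vector_derivative c') (at s within I)"
  shows "((\<lambda>\<tau>. F (c \<tau>)) has_vector_derivative D F (c s) c') (at s within I)"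
proof -
  have g: "\<And>x. x \<in> S \<Longrightarrow> (F has_derivative D F x) (at x within S)" using sm_D assms(1) by blast
  have "c ` I \<subseteq> S" using assms(3) by blast
  from has_derivative_in_compose2[OF g this assms(2) assms(4)[unfolded has_vector_derivative_def]]
  have "((\<lambda>\<tau>. F (c \<tau>)) has_derivative (\<lambda>y. D F (c s) (y *\<^sub>R c'))) (at s within I)" .
  moreover have "linear (D F (c s))" using D_linear_map assms by blast
  ultimately show ?thesis unfolding has_vector_derivative_def by (simp add: linear_scale)
qed

lemma nth_Suc: "nth_vderiv (Suc n) I g = (\<lambda>s. vector_derivative (nth_vderiv n I g) (at s within I))"
  by (simp add: nth_vderiv_def)

lemma nthv:
  assumes "sm F" "\<xi> \<in> Om"
  shows "s \<in> I \<Longrightarrow> nth_vderiv n I (\<lambda>\<tau>. F (\<tau>, \<xi>)) s = (Dt ^^ n) F (s, \<xi>)"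
proof (induction n arbitrary: s)
  case 0
  then show ?case by (simp add: nth_vderiv_def)
next
  case (Suc n)
  have c: "((\<lambda>\<tau>. (\<tau>, \<xi>)) has_vector_derivative (1, 0)) (at s within I)"
    by (intro has_vector_derivative_Pair has_vector_derivative_id has_vector_derivative_const)
  have vd: "((\<lambda>\<tau>. (Dt ^^ n) F (\<tau>, \<xi>)) has_vector_derivative D ((Dt ^^ n) F) (s, \<xi>) (1, 0)) (at s within I)"
    by (rule VD[OF sm_Dtn[OF assms(1)] Suc.prems _ c]) (use assms(2) in auto)
  have eq: "\<And>\<tau>. \<tau> \<in> I \<Longrightarrow> nth_vderiv n I (\<lambda>\<tau>. F (\<tau>, \<xi>)) \<tau> = (Dt ^^ n) F (\<tau>, \<xi>)"
    using Suc.IH .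
  have "(nth_vderiv n I (\<lambda>\<tau>. F (\<tau>, \<xi>)) has_vector_derivative D ((Dt ^^ n) F) (s, \<xi>) (1, 0)) (at s within I)"
    by (rule has_vector_derivative_transform[OF Suc.prems eq vd])
  then have "(nth_vderiv n I (\<lambda>\<tau>. F (\<tau>, \<xi>)) has_vector_derivative (Dt ^^ Suc n) F (s, \<xi>)) (at s within I)"
    by (simp add: DT_def)
  then show ?case unfolding nth_Suc using vector_derivative_within[OF I_nbot[OF Suc.prems]] by simp
qed

lemma repr: "sm F \<Longrightarrow> p \<in> S \<Longrightarrow> D F p (0, w) = (\<Sum>b\<in>Basis. (w \<bullet> b) *\<^sub>R D F p (0, b))"
proof -
  assume a: "sm F" "p \<in> S"
  have "linear (D F p)" using D_linear_map a by blast
  moreover have "linear (\<lambda>w::'a. (0::real, w))" by (auto simp: linear_iff)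
  ultimately have "linear (\<lambda>w. D F p (0, w))" using linear_compose[of "\<lambda>w::'a. (0::real, w)" "D F p"]
    by (simp add: o_def)
  then show ?thesis using lin_repr[of "\<lambda>w. D F p (0, w)" w] by simp
qed

lemma sm_app: "sm F \<Longrightarrow> sm g \<Longrightarrow> sm (\<lambda>q. D F q (0, g q))"
proof -
  assume a: "sm F" "sm g"
  have "sm (\<lambda>q. \<Sum>b\<in>Basis. (g q \<bullet> b) *\<^sub>R D F q (0, b))"
    by (intro sm_sum sm_scaleR sm_linear[OF bounded_linear_inner_left] sm_Dv a) simp
  then show ?thesis by (rule sm_cong) (simp add: repr a)
qed

lemma Sym:
  fixes F :: "real \<times> 'a \<Rightarrow> 'c::banach"
  assumes F: "sm F" and p: "p \<in> S"
  shows "D (\<lambda>q. D F q (0, w)) p (1, 0) = D (Dt F) p (0, w)"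
proof -
  obtain \<tau>0 \<xi>0 where p': "p = (\<tau>0, \<xi>0)" "\<tau>0 \<in> I" "\<xi>0 \<in> Om" using p by auto
  obtain a b where ab: "a \<in> I" "b \<in> I" "a \<le> \<tau>0" "\<tau>0 \<le> b" "a < b" "{a..b} \<subseteq> I"
    using I_seg[OF p'(2)] by blast
  obtain r where r: "r > 0" "ball \<xi>0 r \<subseteq> Om" using opnO p'(3) open_contains_ball by blast
  define U where "U = ball \<xi>0 r"
  have U: "open U" "convex U" "\<xi>0 \<in> U" "U \<subseteq> Om" using r by (auto simp: U_def)
  define A where "A = Dt F"
  have sA: "sm A" unfolding A_def by (rule sm_Dt[OF F])
  define B where "B = (\<lambda>q. D F q (0, w))"
  have sB: "sm B" unfolding B_def by (rule sm_Dv[OF F])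
  have dtau: "((\<lambda>\<sigma>. K (\<sigma>, \<zeta>)) has_vector_derivative D K (\<sigma>, \<zeta>) (1, 0)) (at \<sigma> within I)"
    if "sm K" "\<sigma> \<in> I" "\<zeta> \<in> Om" for K :: "real \<times> 'a \<Rightarrow> 'c" and \<sigma> \<zeta>
  proof -
    have c: "((\<lambda>\<tau>. (\<tau>, \<zeta>)) has_vector_derivative (1, 0)) (at \<sigma> within I)"
      by (intro has_vector_derivative_Pair has_vector_derivative_id has_vector_derivative_const)
    show ?thesis by (rule VD[OF that(1) that(2) _ c]) (use that(3) in auto)
  qed
  have dxi: "((\<lambda>\<zeta>. K (\<sigma>, \<zeta>)) has_derivative (\<lambda>v. D K (\<sigma>, \<zeta>) (0, v))) (at \<zeta> within U)"
    if "sm K" "\<sigma> \<in> I" "\<zeta> \<in> U" for K :: "real \<times> 'a \<Rightarrow> 'c" and \<sigma> \<zeta>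
  proof -
    have g: "\<And>x. x \<in> S \<Longrightarrow> (K has_derivative D K x) (at x within S)" using sm_D that(1) by blast
    have c: "((\<lambda>\<zeta>. (\<sigma>, \<zeta>)) has_derivative (\<lambda>v. (0, v))) (at \<zeta> within U)"
      by (auto intro!: derivative_eq_intros)
    have "(\<lambda>\<zeta>. (\<sigma>, \<zeta>)) ` U \<subseteq> S" using that(2) U(4) by auto
    from has_derivative_in_compose2[OF g this that(3) c] show ?thesis .
  qed
  have contT: "continuous_on T (\<lambda>\<sigma>. K (\<sigma>, \<zeta>))"
    if "sm K" "T \<subseteq> I" "\<zeta> \<in> Om" for K :: "real \<times> 'a \<Rightarrow> 'c" and T \<zeta>
  proof (rule continuous_on_compose2[OF sm_cont[OF that(1)]])
    show "continuous_on T (\<lambda>\<sigma>. (\<sigma>, \<zeta>))" by (intro continuous_intros)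
    show "(\<lambda>\<sigma>. (\<sigma>, \<zeta>)) ` T \<subseteq> S" using that by auto
  qed
  have contJ: "continuous_on (U \<times> {a..b}) (\<lambda>x. K (snd x, fst x))"
    if "sm K" for K :: "real \<times> 'a \<Rightarrow> 'c"
  proof (rule continuous_on_compose2[OF sm_cont[OF that(1)]])
    show "continuous_on (U \<times> {a..b}) (\<lambda>x. (snd x, fst x))" by (intro continuous_intros)
    show "(\<lambda>x. (snd x, fst x)) ` (U \<times> {a..b}) \<subseteq> S" using U(4) ab(6) by auto
  qed
  have ftc: "F (\<tau>, \<zeta>) = F (a, \<zeta>) + integral {a..\<tau>} (\<lambda>\<sigma>. A (\<sigma>, \<zeta>))"
    if "\<tau> \<in> {a..b}" "\<zeta> \<in> Om" for \<tau> \<zeta>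
  proof -
    have "a \<le> \<tau>" using that by simp
    have "((\<lambda>\<sigma>. A (\<sigma>, \<zeta>)) has_integral (F (\<tau>, \<zeta>) - F (a, \<zeta>))) {a..\<tau>}"
    proof (rule fundamental_theorem_of_calculus[OF \<open>a \<le> \<tau>\<close>])
      fix x assume x: "x \<in> {a..\<tau>}"
      then have "x \<in> I" using that ab(6) by auto
      have "((\<lambda>\<sigma>. F (\<sigma>, \<zeta>)) has_vector_derivative A (x, \<zeta>)) (at x within I)"
        using dtau[OF F \<open>x \<in> I\<close> that(2)] by (simp add: A_def DT_def)
      then show "((\<lambda>\<sigma>. F (\<sigma>, \<zeta>)) has_vector_derivative A (x, \<zeta>)) (at x within {a..\<tau>})"
        by (rule has_vector_derivative_within_subset) (use that ab(6) in auto)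
    qed
    then show ?thesis by (simp add: integral_unique)
  qed
  define Bl where "Bl = (\<lambda>\<zeta> \<sigma>. Blinfun (\<lambda>v. D A (\<sigma>, \<zeta>) (0, v)))"
  have Bl_apply: "blinfun_apply (Bl \<zeta> \<sigma>) = (\<lambda>v. D A (\<sigma>, \<zeta>) (0, v))" if "\<sigma> \<in> I" "\<zeta> \<in> U" for \<sigma> \<zeta>
    unfolding Bl_def by (rule bounded_linear_Blinfun_apply[OF has_derivative_bounded_linear[OF dxi[OF sA that]]])
  have Bl_cont: "continuous_on (U \<times> {a..b}) (\<lambda>(\<zeta>, \<sigma>). Bl \<zeta> \<sigma>)"
  proof (rule continuous_on_blinfun_componentwise)
    fix i :: 'a assume "i \<in> Basis"
    have "continuous_on (U \<times> {a..b}) (\<lambda>x. D A (snd x, fst x) (0, i))"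
      by (rule contJ[OF sm_Dv[OF sA]])
    then show "continuous_on (U \<times> {a..b}) (\<lambda>x. blinfun_apply (case x of (\<zeta>, \<sigma>) \<Rightarrow> Bl \<zeta> \<sigma>) i)"
      by (rule continuous_on_cong[THEN iffD1, rotated 2]) (use Bl_apply ab(6) in auto)
  qed
  have leib: "((\<lambda>\<zeta>. integral {a..\<tau>} (\<lambda>\<sigma>. A (\<sigma>, \<zeta>))) has_derivative
      blinfun_apply (integral {a..\<tau>} (Bl \<xi>0))) (at \<xi>0 within U)"
    if "\<tau> \<in> {a..b}" for \<tau>
  proof -
    have sub: "{a..\<tau>} \<subseteq> {a..b}" using that by auto
    have "((\<lambda>\<zeta>. integral (cbox a \<tau>) (\<lambda>\<sigma>. A (\<sigma>, \<zeta>))) has_derivative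
      blinfun_apply (integral (cbox a \<tau>) (Bl \<xi>0))) (at \<xi>0 within U)"
    proof (rule leibniz_rule[where f = "\<lambda>\<zeta> \<sigma>. A (\<sigma>, \<zeta>)" and fx = Bl])
      fix \<zeta> \<sigma> assume z: "\<zeta> \<in> U" and s: "\<sigma> \<in> cbox a \<tau>"
      then have "\<sigma> \<in> I" using sub ab(6) by auto
      then show "((\<lambda>\<zeta>. A (\<sigma>, \<zeta>)) has_derivative blinfun_apply (Bl \<zeta> \<sigma>)) (at \<zeta> within U)"
        using dxi[OF sA \<open>\<sigma> \<in> I\<close> z] Bl_apply[OF \<open>\<sigma> \<in> I\<close> z] by simp
    next
      fix \<zeta> assume z: "\<zeta> \<in> U"
      have "continuous_on {a..\<tau>} (\<lambda>\<sigma>. A (\<sigma>, \<zeta>))"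
        by (rule contT[OF sA]) (use sub ab(6) z U(4) in auto)
      then show "(\<lambda>\<sigma>. A (\<sigma>, \<zeta>)) integrable_on cbox a \<tau>"
        by (simp add: integrable_continuous_interval)
    next
      show "continuous_on (U \<times> cbox a \<tau>) (\<lambda>(\<zeta>, \<sigma>). Bl \<zeta> \<sigma>)"
        by (rule continuous_on_subset[OF Bl_cont]) (use sub in auto)
    qed (use U in auto)
    then show ?thesis by simp
  qed
  have step3: "B (\<tau>, \<xi>0) = B (a, \<xi>0) + integral {a..\<tau>} (\<lambda>\<sigma>. D A (\<sigma>, \<xi>0) (0, w))"
    if "\<tau> \<in> {a..b}" for \<tau>
  proof -
    have "\<tau> \<in> I" using that ab(6) by auto
    have d1: "((\<lambda>\<zeta>. F (\<tau>, \<zeta>)) has_derivative (\<lambda>v. D F (\<tau>, \<xi>0) (0, v))) (at \<xi>0)"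
      using dxi[OF F \<open>\<tau> \<in> I\<close> U(3)] at_within_open[OF U(3) U(1)] by simp
    have d2: "((\<lambda>\<zeta>. F (a, \<zeta>) + integral {a..\<tau>} (\<lambda>\<sigma>. A (\<sigma>, \<zeta>))) has_derivative
        (\<lambda>v. D F (a, \<xi>0) (0, v) + blinfun_apply (integral {a..\<tau>} (Bl \<xi>0)) v)) (at \<xi>0 within U)"
      by (rule has_derivative_add[OF dxi[OF F ab(1) U(3)] leib[OF that]])
    have d2': "((\<lambda>\<zeta>. F (\<tau>, \<zeta>)) has_derivative
        (\<lambda>v. D F (a, \<xi>0) (0, v) + blinfun_apply (integral {a..\<tau>} (Bl \<xi>0)) v)) (at \<xi>0)"
    proof -
      have "((\<lambda>\<zeta>. F (\<tau>, \<zeta>)) has_derivative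
        (\<lambda>v. D F (a, \<xi>0) (0, v) + blinfun_apply (integral {a..\<tau>} (Bl \<xi>0)) v)) (at \<xi>0 within U)"
        by (rule has_derivative_transform[OF U(3) _ d2]) (use ftc[OF that] U(4) in auto)
      then show ?thesis using at_within_open[OF U(3) U(1)] by simp
    qed
    have "(\<lambda>v. D F (\<tau>, \<xi>0) (0, v)) = (\<lambda>v. D F (a, \<xi>0) (0, v) + blinfun_apply (integral {a..\<tau>} (Bl \<xi>0)) v)"
      by (rule has_derivative_unique[OF d1 d2'])
    then have e: "D F (\<tau>, \<xi>0) (0, w) = D F (a, \<xi>0) (0, w) + blinfun_apply (integral {a..\<tau>} (Bl \<xi>0)) w"
      by metis
    have xI: "\<And>x. x \<in> {a..\<tau>} \<Longrightarrow> x \<in> I" using that ab(6) by auto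
    have cB: "continuous_on {a..\<tau>} (Bl \<xi>0)"
    proof (rule continuous_on_blinfun_componentwise)
      fix i :: 'a assume "i \<in> Basis"
      have "continuous_on {a..\<tau>} (\<lambda>\<sigma>. D A (\<sigma>, \<xi>0) (0, i))"
        by (rule contT[OF sm_Dv[OF sA]]) (use that ab(6) p'(3) in auto)
      then show "continuous_on {a..\<tau>} (\<lambda>\<sigma>. blinfun_apply (Bl \<xi>0 \<sigma>) i)"
        by (rule continuous_on_cong[THEN iffD1, rotated 2]) (use Bl_apply[OF xI U(3)] in auto)
    qed
    have "blinfun_apply (integral {a..\<tau>} (Bl \<xi>0)) w = integral {a..\<tau>} (\<lambda>\<sigma>. blinfun_apply (Bl \<xi>0 \<sigma>) w)"
      by (rule blinfun_apply_integral[OF integrable_continuous_interval[OF cB]])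
    also have "\<dots> = integral {a..\<tau>} (\<lambda>\<sigma>. D A (\<sigma>, \<xi>0) (0, w))"
      by (rule integral_cong) (use Bl_apply[OF xI U(3)] in auto)
    finally show ?thesis using e by (simp add: B_def)
  qed
  have v1: "((\<lambda>\<tau>. B (\<tau>, \<xi>0)) has_vector_derivative D B (\<tau>0, \<xi>0) (1, 0)) (at \<tau>0 within {a..b})"
    by (rule has_vector_derivative_within_subset[OF dtau[OF sB p'(2) p'(3)] ab(6)])
  have cw: "continuous_on {a..b} (\<lambda>\<sigma>. D A (\<sigma>, \<xi>0) (0, w))"
    by (rule contT[OF sm_Dv[OF sA] ab(6) p'(3)])
  have v2: "((\<lambda>\<tau>. B (a, \<xi>0) + integral {a..\<tau>} (\<lambda>\<sigma>. D A (\<sigma>, \<xi>0) (0, w))) has_vector_derivative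
      D A (\<tau>0, \<xi>0) (0, w)) (at \<tau>0 within {a..b})"
  proof -
    have t0: "\<tau>0 \<in> {a..b}" using ab(3,4) by simp
    show ?thesis
      using has_vector_derivative_add[OF has_vector_derivative_const[of "B (a, \<xi>0)"] integral_has_vector_derivative[OF cw t0]]
      by (simp only: add_0_left)
  qed
  have v1': "((\<lambda>\<tau>. B (a, \<xi>0) + integral {a..\<tau>} (\<lambda>\<sigma>. D A (\<sigma>, \<xi>0) (0, w))) has_vector_derivative
      D B (\<tau>0, \<xi>0) (1, 0)) (at \<tau>0 within {a..b})"
    by (rule has_vector_derivative_transform[OF _ step3[symmetric] v1]) (use ab(3,4) in simp_all)
  have nb: "at \<tau>0 within {a..b} \<noteq> bot"
    using ab(3,4,5) by (simp add: trivial_limit_within)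
  have "D B (\<tau>0, \<xi>0) (1, 0) = D A (\<tau>0, \<xi>0) (0, w)"
    by (rule vector_derivative_unique_within[OF nb v1' v2])
  then show ?thesis by (simp add: p'(1) A_def B_def)
qed

lemma P1:
  fixes G :: "real \<times> 'a \<Rightarrow> 'c::banach"
  assumes G: "sm G" and g: "sm g" and p: "p \<in> S"
  shows "Dt (\<lambda>q. D G q (0, g q)) p = D (Dt G) p (0, g p) + D G p (0, Dt g p)"
proof -
  have sb: "sm (\<lambda>q. g q \<bullet> b)" for b by (rule sm_linear[OF bounded_linear_inner_left g])
  have sg: "sm (\<lambda>q. D G q (0, b))" for b by (rule sm_Dv[OF G])
  have "Dt (\<lambda>q. D G q (0, g q)) p = D (\<lambda>q. \<Sum>b\<in>Basis. (g q \<bullet> b) *\<^sub>R D G q (0, b)) p (1, 0)"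
    unfolding DT_def by (rule D_cong2[OF p]) (rule repr[OF G])
  also have "\<dots> = (\<Sum>b\<in>Basis. D (\<lambda>q. (g q \<bullet> b) *\<^sub>R D G q (0, b)) p (1, 0))"
    by (rule D_sum) (auto intro: sm_scaleR sb sg p)
  also have "\<dots> = (\<Sum>b\<in>Basis. (g p \<bullet> b) *\<^sub>R D (\<lambda>q. D G q (0, b)) p (1, 0) + (D g p (1, 0) \<bullet> b) *\<^sub>R D G p (0, b))"
    by (rule sum.cong[OF refl]) (simp add: D_scaleR[OF sb sg p] D_lin[OF bounded_linear_inner_left g p])
  also have "\<dots> = (\<Sum>b\<in>Basis. (g p \<bullet> b) *\<^sub>R D (Dt G) p (0, b) + (Dt g p \<bullet> b) *\<^sub>R D G p (0, b))"
    by (rule sum.cong[OF refl]) (simp only: Sym[OF G p] DT_def)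
  also have "\<dots> = (\<Sum>b\<in>Basis. (g p \<bullet> b) *\<^sub>R D (Dt G) p (0, b)) + (\<Sum>b\<in>Basis. (Dt g p \<bullet> b) *\<^sub>R D G p (0, b))"
    by (rule sum.distrib)
  also have "\<dots> = D (Dt G) p (0, g p) + D G p (0, Dt g p)"
    by (simp only: repr[OF sm_Dt[OF G] p, symmetric] repr[OF G p, symmetric])
  finally show ?thesis .
qed

lemma Dtn_add: "sm f \<Longrightarrow> sm g \<Longrightarrow> p \<in> S \<Longrightarrow> (Dt ^^ n) (\<lambda>q. f q + g q) p = (Dt ^^ n) f p + (Dt ^^ n) g p"
proof (induction n arbitrary: p)
  case 0 then show ?case by simp
next
  case (Suc n)
  have "(Dt ^^ Suc n) (\<lambda>q. f q + g q) p = D (\<lambda>q. (Dt ^^ n) f q + (Dt ^^ n) g q) p (1, 0)"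
    by (simp add: DT_def) (rule D_cong2[OF Suc.prems(3)], simp add: Suc)
  also have "\<dots> = (Dt ^^ Suc n) f p + (Dt ^^ Suc n) g p"
    by (simp add: DT_def D_add[OF sm_Dtn[OF Suc.prems(1)] sm_Dtn[OF Suc.prems(2)] Suc.prems(3)])
  finally show ?case .
qed

lemma Leib:
  fixes G :: "real \<times> 'a \<Rightarrow> 'c::banach"
  assumes G: "sm G" and h: "sm h"
  shows "p \<in> S \<Longrightarrow> (Dt ^^ n) (\<lambda>q. D G q (0, h q)) p
      = (\<Sum>k\<le>n. of_nat (n choose k) *\<^sub>R D ((Dt ^^ k) G) p (0, (Dt ^^ (n - k)) h p))"
proof (induction n arbitrary: p)
  case 0 then show ?case by simp
next
  case (Suc n)
  let ?Q = "\<lambda>k q. D ((Dt ^^ k) G) q (0, (Dt ^^ (n - k)) h q)"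
  have sQ: "sm (?Q k)" for k by (intro sm_app sm_Dtn G h)
  have "(Dt ^^ Suc n) (\<lambda>q. D G q (0, h q)) p = D (\<lambda>q. \<Sum>k\<le>n. of_nat (n choose k) *\<^sub>R ?Q k q) p (1, 0)"
    by (simp add: DT_def) (rule D_cong2[OF Suc.prems], simp add: Suc.IH)
  also have "\<dots> = (\<Sum>k\<le>n. D (\<lambda>q. of_nat (n choose k) *\<^sub>R ?Q k q) p (1, 0))"
    by (rule D_sum) (auto intro: sm_linear[OF bounded_linear_scaleR_right] sQ Suc.prems)
  also have "\<dots> = (\<Sum>k\<le>n. of_nat (n choose k) *\<^sub>R Dt (?Q k) p)"
    by (rule sum.cong[OF refl]) (simp add: D_lin[OF bounded_linear_scaleR_right sQ Suc.prems] DT_def)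
  also have "\<dots> = (\<Sum>k\<le>n. of_nat (n choose k) *\<^sub>R
       (D ((Dt ^^ Suc k) G) p (0, (Dt ^^ (n - k)) h p) + D ((Dt ^^ k) G) p (0, (Dt ^^ Suc (n - k)) h p)))"
    by (rule sum.cong[OF refl]) (simp add: P1[OF sm_Dtn[OF G] sm_Dtn[OF h] Suc.prems])
  also have "\<dots> = (\<Sum>k\<le>Suc n. of_nat (Suc n choose k) *\<^sub>R D ((Dt ^^ k) G) p (0, (Dt ^^ (Suc n - k)) h p))"
    by (rule comb[where f = "\<lambda>k j. D ((Dt ^^ k) G) p (0, (Dt ^^ j) h p)"])
  finally show ?case .
qed

lemma slice:
  assumes "sm F" "0 \<in> I" "\<xi> \<in> Om" "\<And>\<zeta>. \<zeta> \<in> Om \<Longrightarrow> Fb \<zeta> = F (0, \<zeta>)"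
  shows "frechet_derivative Fb (at \<xi>) = (\<lambda>w. D F (0, \<xi>) (0, w))"
proof -
  have g: "\<And>x. x \<in> S \<Longrightarrow> (F has_derivative D F x) (at x within S)" using sm_D assms(1) by blast
  have c: "((\<lambda>\<zeta>. (0::real, \<zeta>)) has_derivative (\<lambda>w. (0, w))) (at \<xi> within Om)"
    by (auto intro!: derivative_eq_intros)
  have "(\<lambda>\<zeta>. (0::real, \<zeta>)) ` Om \<subseteq> S" using assms(2) by auto
  from has_derivative_in_compose2[OF g this assms(3) c]
  have "((\<lambda>\<zeta>. F (0, \<zeta>)) has_derivative (\<lambda>w. D F (0, \<xi>) (0, w))) (at \<xi>)"
    using at_within_open[OF assms(3) opnO] by simp
  then have "(Fb has_derivative (\<lambda>w. D F (0, \<xi>) (0, w))) (at \<xi>)"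
    by (rule has_derivative_transform_within_open[OF _ opnO assms(3)]) (simp add: assms(4))
  then show ?thesis by (simp add: frechet_derivative_at[symmetric])
qed

end



primrec Gs :: "(real \<times> 'a::euclidean_space) set \<Rightarrow> (real \<times> 'a \<Rightarrow> 'a) \<Rightarrow> nat \<Rightarrow> real \<times> 'a \<Rightarrow> 'a" where
  "Gs S h 0 = h"
| "Gs S h (Suc i) = (\<lambda>q. DT S (Gs S h i) q + Dw S (Gs S h i) q (0, h q))"

context setting
begin

lemma sm_Gs: "sm h \<Longrightarrow> sm (Gs S h i)"
  by (induction i) (auto intro!: sm_add sm_Dt sm_app)

end

theorem theorem2p9:
  fixes \<Omega> :: "'a::euclidean_space set" and I :: "real set"
    and H :: "real \<Rightarrow> real \<Rightarrow> 'a \<Rightarrow> 'a"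
    and Hn :: "real \<Rightarrow> nat \<Rightarrow> 'a \<Rightarrow> 'a"
    and xi :: "real \<Rightarrow> 'a \<Rightarrow> real \<Rightarrow> 'a"
  assumes "open \<Omega>"
    and "is_interval I" and "0 \<in> I" and "\<exists>s\<in>I. s \<noteq> 0"
    and smooth: "\<And>t. t > 0 \<Longrightarrow> smooth_on (I \<times> \<Omega>) (\<lambda>(\<tau>, \<xi>). H t \<tau> \<xi>)"
    and series: "\<And>t n \<xi>. t > 0 \<Longrightarrow> \<xi> \<in> \<Omega> \<Longrightarrow> Hn t n \<xi> = nth_vderiv n I (\<lambda>\<tau>. H t \<tau> \<xi>) 0"
    and flow_init: "\<And>t x. t > 0 \<Longrightarrow> x \<in> \<Omega> \<Longrightarrow> xi t x 0 = x"
    and flow_in: "\<And>t x \<tau>. t > 0 \<Longrightarrow> x \<in> \<Omega> \<Longrightarrow> \<tau> \<in> I \<Longrightarrow> xi t x \<tau> \<in> \<Omega>"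
    and flow_ode: "\<And>t x \<tau>. t > 0 \<Longrightarrow> x \<in> \<Omega> \<Longrightarrow> \<tau> \<in> I \<Longrightarrow>
        (xi t x has_vector_derivative H t \<tau> (xi t x \<tau>)) (at \<tau> within I)"
  shows "\<forall>t>0. \<forall>x\<in>\<Omega>. \<forall>m.
     nth_vderiv m I (xi t x) 0 = (if m = 0 then x else 0) + Htrans_coeff (Hn t) (Hn t) m x"
proof (intro allI impI ballI)
  fix t :: real and x m
  assume t: "t > 0" and x: "x \<in> \<Omega>"
  have nd: "\<exists>a\<in>I. \<exists>b\<in>I. a < b"
  proof -
    obtain s where s: "s \<in> I" "s \<noteq> 0" using assms(4) by blast
    show ?thesis
    proof (cases "s < 0")
      case True then show ?thesis using s assms(3) by blast
    next
      case False then have "0 < s" using s by simp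
      then show ?thesis using s assms(3) by blast
    qed
  qed
  interpret setting I \<Omega>
    using assms(1,2) nd by unfold_locales
  define h where "h = (\<lambda>(\<tau>, \<xi>). H t \<tau> \<xi>)"
  have sh: "sm h" using smooth[OF t] by (simp add: h_def)
  have hx: "h (a, b) = H t a b" for a b by (simp add: h_def)
  define c where "c = (\<lambda>\<tau>. (\<tau>, xi t x \<tau>))"
  have cS: "\<And>\<tau>. \<tau> \<in> I \<Longrightarrow> c \<tau> \<in> S" using flow_in[OF t x] by (simp add: c_def)
  have cv: "(c has_vector_derivative (1, h (c \<tau>))) (at \<tau> within I)" if "\<tau> \<in> I" for \<tau>
    unfolding c_def hx by (intro has_vector_derivative_Pair has_vector_derivative_id flow_ode[OF t x that])
  have A: "\<tau> \<in> I \<Longrightarrow> nth_vderiv (Suc j) I (xi t x) \<tau> = Gs S h j (c \<tau>)" for j \<tau>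
  proof (induction j arbitrary: \<tau>)
    case 0
    have "vector_derivative (xi t x) (at \<tau> within I) = H t \<tau> (xi t x \<tau>)"
      by (rule vector_derivative_within[OF I_nbot[OF 0] flow_ode[OF t x 0]])
    then show ?case by (simp add: nth_vderiv_def c_def hx)
  next
    case (Suc j)
    have vd: "((\<lambda>\<tau>. Gs S h j (c \<tau>)) has_vector_derivative D (Gs S h j) (c \<tau>) (1, h (c \<tau>))) (at \<tau> within I)"
      by (rule VD[OF sm_Gs[OF sh] Suc.prems cS cv[OF Suc.prems]])
    have eq: "\<And>s. s \<in> I \<Longrightarrow> nth_vderiv (Suc j) I (xi t x) s = Gs S h j (c s)" using Suc.IH .
    have vd2: "(nth_vderiv (Suc j) I (xi t x) has_vector_derivative D (Gs S h j) (c \<tau>) (1, h (c \<tau>))) (at \<tau> within I)"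
      by (rule has_vector_derivative_transform[OF Suc.prems eq vd])
    have lin: "linear (D (Gs S h j) (c \<tau>))" using D_linear_map[OF sm_Gs[OF sh] cS[OF Suc.prems]] .
    have "D (Gs S h j) (c \<tau>) (1, h (c \<tau>)) = D (Gs S h j) (c \<tau>) ((1, 0) + (0, h (c \<tau>)))" by simp
    also have "\<dots> = D (Gs S h j) (c \<tau>) (1, 0) + D (Gs S h j) (c \<tau>) (0, h (c \<tau>))"
      by (rule linear_add[OF lin])
    also have "\<dots> = Gs S h (Suc j) (c \<tau>)" by (simp add: DT_def)
    finally have "D (Gs S h j) (c \<tau>) (1, h (c \<tau>)) = Gs S h (Suc j) (c \<tau>)" .
    then show ?case using vector_derivative_within[OF I_nbot[OF Suc.prems] vd2] nth_Suc[of "Suc j" "xi t x"]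
      by simp
  qed
  have Hn_eq: "Hn t n \<xi> = (Dt ^^ n) h (0, \<xi>)" if "\<xi> \<in> \<Omega>" for n \<xi>
  proof -
    have "Hn t n \<xi> = nth_vderiv n I (\<lambda>\<tau>. h (\<tau>, \<xi>)) 0" using series[OF t that] by (simp add: hx)
    also have "\<dots> = (Dt ^^ n) h (0, \<xi>)" by (rule nthv[OF sh that assms(3)])
    finally show ?thesis .
  qed
  have B: "\<forall>n. \<forall>\<xi>\<in>\<Omega>. Fbr (Hn t) (Hn t) i n \<xi> = (Dt ^^ n) (Gs S h i) (0, \<xi>)" for i
  proof (induction i)
    case 0
    then show ?case using Hn_eq by simp
  next
    case (Suc i)
    show ?case
    proof (intro allI ballI)
      fix n \<xi> assume \<xi>: "\<xi> \<in> \<Omega>"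
      have sG: "sm (Gs S h i)" by (rule sm_Gs[OF sh])
      have p: "(0, \<xi>) \<in> S" using \<xi> assms(3) by simp
      have fd: "frechet_derivative (Fbr (Hn t) (Hn t) i k) (at \<xi>) = (\<lambda>w. D ((Dt ^^ k) (Gs S h i)) (0, \<xi>) (0, w))" for k
        by (rule slice[OF sm_Dtn[OF sG] assms(3) \<xi>]) (use Suc.IH in blast)
      have "Fbr (Hn t) (Hn t) (Suc i) n \<xi> = (Dt ^^ Suc n) (Gs S h i) (0, \<xi>)
          + (\<Sum>k\<le>n. of_nat (n choose k) *\<^sub>R D ((Dt ^^ k) (Gs S h i)) (0, \<xi>) (0, (Dt ^^ (n - k)) h (0, \<xi>)))"
        using Suc.IH \<xi> by (simp add: fd Hn_eq)
      also have "\<dots> = (Dt ^^ n) (Dt (Gs S h i)) (0, \<xi>) + (Dt ^^ n) (\<lambda>q. D (Gs S h i) q (0, h q)) (0, \<xi>)"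
        by (simp add: Leib[OF sG sh p] funpow_swap1)
      also have "\<dots> = (Dt ^^ n) (Gs S h (Suc i)) (0, \<xi>)"
        by (simp add: Dtn_add[OF sm_Dt[OF sG] sm_app[OF sG sh] p])
      finally show "Fbr (Hn t) (Hn t) (Suc i) n \<xi> = (Dt ^^ n) (Gs S h (Suc i)) (0, \<xi>)" .
    qed
  qed
  show "nth_vderiv m I (xi t x) 0 = (if m = 0 then x else 0) + Htrans_coeff (Hn t) (Hn t) m x"
  proof (cases m)
    case 0
    then show ?thesis by (simp add: nth_vderiv_def Htrans_coeff_def flow_init[OF t x])
  next
    case (Suc j)
    have "nth_vderiv m I (xi t x) 0 = Gs S h j (0, x)"
      using A[OF assms(3)] Suc by (simp add: c_def flow_init[OF t x])
    moreover have "Htrans_coeff (Hn t) (Hn t) m x = Gs S h j (0, x)"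
      using B[of j] x Suc by (simp add: Htrans_coeff_def)
    ultimately show ?thesis using Suc by simp
  qed
qed

end
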